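(* Let $\lambda>0$, $d\ge0$ be constants and let $q$ be a probability measure on $(0,\infty)$ of the form $q=q_a+\sum_{r^j\in\mathcal D}p^j\delta_{r^j}$, with $q_a$ absolutely continuous w.r.t. Lebesgue measure, $\mathcal D\subset(0,\infty)$ finite, $p^j>0$, and finite mean. Let $\rho^r\ge0$ be a solution with finite mass $N=\int_0^\infty\rho^r dr\in(0,\infty)$ of the stationary equation $\rho^r-\rho^s+\lambda q((s,r])=d\int_{(s,r]}\rho^\alpha d\alpha$ for all $0\le s<r$, and define $\mu^{\rm in}=\lambda/N$, $\mu^{\rm out}=\rho^0/N$. Let $\hat q(\xi)=\int_{[0,\infty)}e^{-\xi x}q(dx)$ denote the Laplace transform of $q$. Then: (1) $\mu^{\rm out}=\mu^{\rm in}-d$; (2) if $d>0$, then $N=\lambda\dfrac{1-\hat q(d)}{d}$; (3) if $d>0$, then $\mu^{\rm in}=\dfrac{d}{1-\hat q(d)}$ and $\mu^{\rm out}=\dfrac{d\hat q(d)}{1-\hat q(d)}=\mu^{\rm in}\hat q(d)$.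
   Context: $\delta_x$ denotes the Dirac measure at $x$. $\rho^0$ is the value of the stationary density at remaining time $r=0$ (interpreted as the exit rate of prisoners completing their sentences). *)

theory Defs
  imports "HOL-Probability.Probability"
begin

definition laplace_tr :: "real measure \<Rightarrow> real \<Rightarrow> real" where
  "laplace_tr q \<xi> = (\<integral>x. exp (- \<xi> * x) \<partial>q)"

end

theory Submission
  imports Defs
begin

lemma E_int:
  fixes d c :: real assumes "d > 0"
  shows "(\<integral>\<^sup>+ r. ennreal (indicator {c..} r * exp (- d * r)) \<partial>lborel) = ennreal (exp (- d * c) / d)"
proof -
  have "((\<lambda>r. indicator {c..} r * exp (- d * r)) has_integral exp (- d * c) / d) UNIV"
  proof -
    have "(\<lambda>r. indicator {c..} r * exp (- d * r)) = (\<lambda>r. if r \<in> {c..} then exp (- d * r) else 0)"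
      by (auto simp: indicator_def)
    then show ?thesis
      using has_integral_exp_minus_to_infinity[OF assms, of c]
      by (simp only: has_integral_restrict_UNIV)
  qed
  then show ?thesis
    by (intro nn_integral_has_integral_lborel) auto
qed

lemma pmeas:
  fixes M :: "real measure" and f :: "real \<Rightarrow> ennreal"
  assumes sf: "sigma_finite_measure M" and Ms: "sets M = sets borel"
    and f: "f \<in> borel_measurable borel"
  shows "(\<lambda>r. \<integral>\<^sup>+ x. indicator {0<..r} x * f x \<partial>M) \<in> borel_measurable lborel"
proof -
  have S1: "sets (lborel \<Otimes>\<^sub>M M) = sets (borel \<Otimes>\<^sub>M borel)"
    by (intro sets_pair_measure_cong) (auto simp: Ms)
  have eqg: "(\<lambda>(r,x). indicator {0<..r} x * f x) = (\<lambda>p. indicator {(r::real,x::real). 0 < x \<and> x \<le> r} p * f (snd p))"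
    by (intro ext) (simp add: indicator_def case_prod_beta)
  have Sset[measurable]: "{(r::real,x::real). 0 < x \<and> x \<le> r} \<in> sets (borel \<Otimes>\<^sub>M borel)"
  proof -
    have "{p \<in> space (borel \<Otimes>\<^sub>M borel). 0 < snd p \<and> snd p \<le> (fst p::real)} \<in> sets (borel \<Otimes>\<^sub>M borel)"
      by measurable
    moreover have "{p \<in> space (borel \<Otimes>\<^sub>M borel). 0 < snd p \<and> snd p \<le> (fst p::real)} = {(r::real,x::real). 0 < x \<and> x \<le> r}"
      by (auto simp: space_pair_measure)
    ultimately show ?thesis by simp
  qed
  have [measurable]: "(\<lambda>p. f (snd p)) \<in> borel_measurable (borel \<Otimes>\<^sub>M borel)"
    by (rule measurable_compose[OF measurable_snd f])
  have "(\<lambda>p. indicator {(r::real,x::real). 0 < x \<and> x \<le> r} p * f (snd p)) \<in> borel_measurable (borel \<Otimes>\<^sub>M borel)"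
    by measurable
  then have "(\<lambda>(r,x). indicator {0<..r} x * f x) \<in> borel_measurable (lborel \<Otimes>\<^sub>M M)"
    unfolding eqg by (simp only: measurable_cong_sets[OF S1 refl])
  then show ?thesis
    using sigma_finite_measure.borel_measurable_nn_integral_fst[OF sf, of "\<lambda>(r,x). indicator {0<..r} x * f x" lborel]
    by simp
qed

lemma fub:
  fixes M :: "real measure" and f :: "real \<Rightarrow> ennreal" and d :: real
  assumes sf: "sigma_finite_measure M" and Ms: "sets M = sets borel"
    and f: "f \<in> borel_measurable borel" and d: "d > 0"
  shows "(\<integral>\<^sup>+ r. ennreal (indicator {0..} r * exp (- d * r)) * (\<integral>\<^sup>+ x. indicator {0<..r} x * f x \<partial>M) \<partial>lborel)
       = (\<integral>\<^sup>+ x. indicator {0<..} x * f x * ennreal (exp (- d * x) / d) \<partial>M)"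
proof -
  interpret pair_sigma_finite M lborel
    using sf by (simp add: pair_sigma_finite_def lborel.sigma_finite_measure_axioms)
  let ?g = "\<lambda>x r. ennreal (indicator {0..} r * exp (- d * r)) * (indicator {0<..r} x * f x)"
  have meas: "case_prod ?g \<in> borel_measurable (M \<Otimes>\<^sub>M lborel)"
  proof -
    have S1: "sets (M \<Otimes>\<^sub>M lborel) = sets (borel \<Otimes>\<^sub>M borel)"
      by (intro sets_pair_measure_cong) (auto simp: Ms)
    moreover have "case_prod ?g \<in> borel_measurable (borel \<Otimes>\<^sub>M borel)"
    proof -
      note f[measurable]
      have eqg: "case_prod ?g = (\<lambda>p. ennreal (indicator {0..} (snd p) * exp (- d * snd p)) * (indicator {(x::real,r::real). 0 < x \<and> x \<le> r} p * f (fst p)))"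
        by (intro ext) (simp add: indicator_def case_prod_beta)
      have Sset[measurable]: "{(x::real,r::real). 0 < x \<and> x \<le> r} \<in> sets (borel \<Otimes>\<^sub>M borel)"
      proof -
        have "{p \<in> space (borel \<Otimes>\<^sub>M borel). 0 < fst p \<and> fst p \<le> (snd p::real)} \<in> sets (borel \<Otimes>\<^sub>M borel)"
          by measurable
        moreover have "{p \<in> space (borel \<Otimes>\<^sub>M borel). 0 < fst p \<and> fst p \<le> (snd p::real)} = {(x::real,r::real). 0 < x \<and> x \<le> r}"
          by (auto simp: space_pair_measure)
        ultimately show ?thesis by simp
      qed
      have [measurable]: "(\<lambda>p. f (fst p)) \<in> borel_measurable (borel \<Otimes>\<^sub>M borel)"
        by (rule measurable_compose[OF measurable_fst f])
      have "(\<lambda>p. ennreal (indicator {0..} (snd p) * exp (- d * snd p)) * (indicator {(x::real,r::real). 0 < x \<and> x \<le> r} p * f (fst p))) \<in> borel_measurable (borel \<Otimes>\<^sub>M borel)"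
        by measurable
      then show ?thesis unfolding eqg .
    qed
    ultimately show ?thesis by (simp only: measurable_cong_sets[OF S1 refl])
  qed
  have "(\<integral>\<^sup>+ r. ennreal (indicator {0..} r * exp (- d * r)) * (\<integral>\<^sup>+ x. indicator {0<..r} x * f x \<partial>M) \<partial>lborel)
      = (\<integral>\<^sup>+ r. (\<integral>\<^sup>+ x. ?g x r \<partial>M) \<partial>lborel)"
  proof (rule nn_integral_cong)
    fix r
    have "(\<lambda>x. indicator {0<..r} x * f x) \<in> borel_measurable borel"
      using f by measurable
    then have "(\<lambda>x. indicator {0<..r} x * f x) \<in> borel_measurable M"
      by (simp only: measurable_cong_sets[OF Ms refl])
    then show "ennreal (indicator {0..} r * exp (- d * r)) * (\<integral>\<^sup>+ x. indicator {0<..r} x * f x \<partial>M) = (\<integral>\<^sup>+ x. ?g x r \<partial>M)"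
      by (simp add: nn_integral_cmult)
  qed
  also have "\<dots> = (\<integral>\<^sup>+ x. (\<integral>\<^sup>+ r. ?g x r \<partial>lborel) \<partial>M)"
    by (rule Fubini'[OF meas])
  also have "\<dots> = (\<integral>\<^sup>+ x. indicator {0<..} x * f x * ennreal (exp (- d * x) / d) \<partial>M)"
  proof (rule nn_integral_cong)
    fix x
    show "(\<integral>\<^sup>+ r. ?g x r \<partial>lborel) = indicator {0<..} x * f x * ennreal (exp (- d * x) / d)"
    proof (cases "x > 0")
      case True
      have "(\<integral>\<^sup>+ r. ?g x r \<partial>lborel) = (\<integral>\<^sup>+ r. f x * ennreal (indicator {x..} r * exp (- d * r)) \<partial>lborel)"
        using True by (intro nn_integral_cong) (auto simp: indicator_def mult.commute)
      also have "\<dots> = f x * ennreal (exp (- d * x) / d)"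
        using E_int[OF d, of x] by (simp add: nn_integral_cmult)
      finally show ?thesis using True by simp
    next
      case False
      then show ?thesis by (simp add: indicator_def)
    qed
  qed
  finally show ?thesis .
qed

lemma dc_tail:
  fixes M :: "real measure" and h :: "real \<Rightarrow> real"
  assumes Ms: "sets M = sets borel" and h: "integrable M h"
  shows "(\<lambda>n. integral\<^sup>L M (\<lambda>x. indicator {real n<..} x * h x)) \<longlonglongrightarrow> 0"
proof -
  have "(\<lambda>n. integral\<^sup>L M (\<lambda>x. indicator {real n<..} x * h x)) \<longlonglongrightarrow> integral\<^sup>L M (\<lambda>x. 0)"
  proof (rule integral_dominated_convergence[where w="\<lambda>x. norm (h x)"])
    show "(\<lambda>x. 0::real) \<in> borel_measurable M" by simp
    fix n :: nat
    have "integrable M (\<lambda>x. indicator {real n<..} x *\<^sub>R h x)"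
      by (rule integrable_mult_indicator) (auto simp: Ms h)
    then show "(\<lambda>x. indicator {real n<..} x * h x) \<in> borel_measurable M"
      by (simp add: borel_measurable_integrable)
    show "AE x in M. norm (indicator {real n<..} x * h x) \<le> norm (h x)"
      by (auto simp: indicator_def)
  next
    show "integrable M (\<lambda>x. norm (h x))" using h by simp
    show "AE x in M. (\<lambda>n. indicator {real n<..} x * h x) \<longlonglongrightarrow> 0"
    proof (rule AE_I2)
      fix x :: real
      obtain k :: nat where "x < real k" using reals_Archimedean2 by blast
      then have "eventually (\<lambda>n. indicator {real n<..} x * h x = 0) sequentially"
        unfolding eventually_sequentially
        by (intro exI[of _ k]) (auto simp: indicator_def)
      then show "(\<lambda>n. indicator {real n<..} x * h x) \<longlonglongrightarrow> 0"
        by (rule tendsto_eventually)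
    qed
  qed
  then show ?thesis by simp
qed

lemma dc_head:
  fixes M :: "real measure" and h :: "real \<Rightarrow> real"
  assumes Ms: "sets M = sets borel" and h: "integrable M h"
    and ae: "AE x in M. 0 < x \<or> h x = 0"
  shows "(\<lambda>n. integral\<^sup>L M (\<lambda>x. indicator {0<..real n} x * h x)) \<longlonglongrightarrow> integral\<^sup>L M h"
proof (rule integral_dominated_convergence[where w="\<lambda>x. norm (h x)"])
  show "h \<in> borel_measurable M" using h by (simp add: borel_measurable_integrable)
  fix n :: nat
  have "integrable M (\<lambda>x. indicator {0<..real n} x *\<^sub>R h x)"
    by (rule integrable_mult_indicator) (auto simp: Ms h)
  then show "(\<lambda>x. indicator {0<..real n} x * h x) \<in> borel_measurable M"
    by (simp add: borel_measurable_integrable)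
  show "AE x in M. norm (indicator {0<..real n} x * h x) \<le> norm (h x)"
    by (auto simp: indicator_def)
next
  show "integrable M (\<lambda>x. norm (h x))" using h by simp
  show "AE x in M. (\<lambda>n. indicator {0<..real n} x * h x) \<longlonglongrightarrow> h x"
    using ae
  proof (rule AE_mp, intro AE_I2 impI)
    fix x :: real assume x: "0 < x \<or> h x = 0"
    obtain k :: nat where "x < real k" using reals_Archimedean2 by blast
    then have "eventually (\<lambda>n. indicator {0<..real n} x * h x = h x) sequentially"
      unfolding eventually_sequentially
      using x by (intro exI[of _ k]) (auto simp: indicator_def)
    then show "(\<lambda>n. indicator {0<..real n} x * h x) \<longlonglongrightarrow> h x"
      by (rule tendsto_eventually)
  qed
qed

theorem proposition2p4:
  fixes lam d :: real and q :: "real measure" and \<rho> :: "real \<Rightarrow> real"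
  assumes lam_pos: "lam > 0" and d_nonneg: "d \<ge> 0"
    and q_prob: "prob_space q" and q_sets: "sets q = sets borel"
    and q_support: "emeasure q {..0} = 0"
    and q_decomp: "\<exists>qa D p. sets qa = sets borel \<and> absolutely_continuous lborel qa
        \<and> finite D \<and> D \<subseteq> {0<..} \<and> (\<forall>r\<in>D. p r > (0::real))
        \<and> (\<forall>A\<in>sets borel. emeasure q A
              = emeasure qa A + ennreal (\<Sum>r\<in>D. p r * indicator A r))"
    and q_mean: "integrable q (\<lambda>x. x)"
    and \<rho>_nonneg: "\<And>r. r \<ge> 0 \<Longrightarrow> \<rho> r \<ge> 0"
    and \<rho>_int: "set_integrable lborel {0..} \<rho>"
    and N_pos: "(LINT r:{0..}|lborel. \<rho> r) > 0"
    and stat: "\<And>s r. 0 \<le> s \<Longrightarrow> s < r \<Longrightarrow>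
        \<rho> r - \<rho> s + lam * measure q {s<..r} = d * (LINT a:{s<..r}|lborel. \<rho> a)"
  shows "let N = (LINT r:{0..}|lborel. \<rho> r); \<mu>in = lam / N; \<mu>out = \<rho> 0 / N in
           \<mu>out = \<mu>in - d
         \<and> (d > 0 \<longrightarrow>
              N = lam * (1 - laplace_tr q d) / d
            \<and> \<mu>in = d / (1 - laplace_tr q d)
            \<and> \<mu>out = d * laplace_tr q d / (1 - laplace_tr q d)
            \<and> \<mu>out = \<mu>in * laplace_tr q d)"
proof -
  define N where "N = (LINT r:{0..}|lborel. \<rho> r)"
  define \<rho>' where "\<rho>' = (\<lambda>x. indicator {0..} x * \<rho> x)"
  interpret q: prob_space q by (rule q_prob)
  have space_q: "space q = UNIV" using sets_eq_imp_space_eq[OF q_sets] by simp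
  have ind_sets: "\<And>A. A \<in> sets borel \<Longrightarrow> A \<in> sets q" using q_sets by simp
  have \<rho>'_int: "integrable lborel \<rho>'" using \<rho>_int by (simp add: set_integrable_def \<rho>'_def)
  have \<rho>'_meas[measurable]: "\<rho>' \<in> borel_measurable borel"
    using borel_measurable_integrable[OF \<rho>'_int] by simp
  have \<rho>'_nn: "\<And>x. 0 \<le> \<rho>' x" by (simp add: \<rho>'_def indicator_def \<rho>_nonneg)
  have N_eq: "N = integral\<^sup>L lborel \<rho>'" by (simp add: N_def \<rho>'_def set_lebesgue_integral_def)
  define F where "F r = measure q {0<..r}" for r
  define G where "G r = integral\<^sup>L lborel (\<lambda>x. indicator {0<..r} x * \<rho>' x)" for r
  have G_eq: "(LINT a:{0<..r}|lborel. \<rho> a) = G r" for r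
    unfolding G_def set_lebesgue_integral_def
    by (intro arg_cong[where f="integral\<^sup>L lborel"] ext) (simp add: \<rho>'_def indicator_def)
  have key: "\<rho> r + lam * F r = \<rho> 0 + d * G r" if r: "0 \<le> r" for r
  proof (cases "r = 0")
    case True
    then show ?thesis by (simp add: F_def G_def)
  next
    case False
    then have "0 < r" using r by simp
    from stat[OF order_refl this] show ?thesis by (simp add: G_eq F_def)
  qed
  have F_nn: "0 \<le> F r" for r by (simp add: F_def)
  have G_nn: "0 \<le> G r" for r
    unfolding G_def by (intro Bochner_Integration.integral_nonneg) (simp add: \<rho>'_nn)
  have AEq: "AE x in q. 0 < x"
  proof (rule AE_I'[of "{..0}"])
    show "{..0} \<in> null_sets q" using q_support by (intro null_setsI) (auto simp: q_sets)
    show "{x \<in> space q. \<not> 0 < x} \<subseteq> {..0}" by auto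
  qed
  have meas_int: "measure q A = integral\<^sup>L q (\<lambda>x. indicator A x * (1::real))" for A
    by (simp add: space_q)
  have L1: "(\<lambda>n. G (real n)) \<longlonglongrightarrow> N"
    unfolding G_def N_eq
  proof (rule dc_head)
    show "AE x in lborel. 0 < x \<or> \<rho>' x = 0"
      using AE_lborel_singleton[of 0] by eventually_elim (auto simp: \<rho>'_def)
  qed (auto simp: \<rho>'_int)
  have L2: "(\<lambda>n. F (real n)) \<longlonglongrightarrow> 1"
  proof -
    have "(\<lambda>n. integral\<^sup>L q (\<lambda>x. indicator {0<..real n} x * (1::real))) \<longlonglongrightarrow> integral\<^sup>L q (\<lambda>x. 1::real)"
      by (rule dc_head[where h="\<lambda>x. 1"]) (use AEq in \<open>auto simp: q_sets\<close>)
    then show ?thesis unfolding F_def meas_int by (simp add: space_q q.prob_space[unfolded space_q])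
  qed
  have L3: "(\<lambda>n. integral\<^sup>L lborel (\<lambda>x. indicator {real n<..} x * \<rho>' x)) \<longlonglongrightarrow> 0"
    by (rule dc_tail) (auto simp: \<rho>'_int)
  have L4: "(\<lambda>n. measure q {real n<..}) \<longlonglongrightarrow> 0"
    unfolding meas_int by (rule dc_tail[where h="\<lambda>x. 1"]) (auto simp: q_sets)
  have bound: "\<rho> (real n) \<le> integral\<^sup>L lborel (\<lambda>x. indicator {real n<..} x * \<rho>' x) + lam * measure q {real n<..}" for n :: nat
  proof -
    define c where "c = \<rho> (real n) - lam * measure q {real n<..}"
    have pt: "c \<le> \<rho> r" if r: "real n < r" for r
    proof -
      have "0 \<le> (LINT a:{real n<..r}|lborel. \<rho> a)"
        unfolding set_lebesgue_integral_def
        by (intro Bochner_Integration.integral_nonneg) (auto simp: indicator_def \<rho>_nonneg)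
      then have "0 \<le> \<rho> r - \<rho> (real n) + lam * measure q {real n<..r}"
        using stat[OF _ r] d_nonneg by simp
      moreover have "measure q {real n<..r} \<le> measure q {real n<..}"
        by (intro q.finite_measure_mono) (auto simp: q_sets)
      ultimately show ?thesis using lam_pos unfolding c_def
        by (smt (verit) mult_left_mono)
    qed
    have "integral\<^sup>L lborel (\<lambda>x. indicator {real n<..real n + 1} x * c) \<le> integral\<^sup>L lborel (\<lambda>x. indicator {real n<..} x * \<rho>' x)"
    proof (rule integral_mono)
      show "integrable lborel (\<lambda>x. indicator {real n<..real n + 1} x * c)"
        by (intro integrable_mult_left integrable_real_indicator) auto
      have "integrable lborel (\<lambda>x. indicator {real n<..} x *\<^sub>R \<rho>' x)"
        by (rule integrable_mult_indicator) (auto simp: \<rho>'_int)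
      then show "integrable lborel (\<lambda>x. indicator {real n<..} x * \<rho>' x)" by simp
      fix x
      show "indicator {real n<..real n + 1} x * c \<le> indicator {real n<..} x * \<rho>' x"
        using pt[of x] \<rho>'_nn[of x] by (auto simp: indicator_def \<rho>'_def)
    qed
    then have "c \<le> integral\<^sup>L lborel (\<lambda>x. indicator {real n<..} x * \<rho>' x)"
      by simp
    then show ?thesis unfolding c_def by simp
  qed
  have \<rho>n: "\<rho> (real n) = \<rho> 0 - lam * F (real n) + d * G (real n)" for n :: nat
    using key[of "real n"] by simp
  have T1: "(\<lambda>n. \<rho> (real n)) \<longlonglongrightarrow> \<rho> 0 - lam * 1 + d * N"
    unfolding \<rho>n by (intro tendsto_intros L1 L2)
  have T2: "(\<lambda>n. \<rho> (real n)) \<longlonglongrightarrow> 0"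
  proof (rule tendsto_sandwich[of "\<lambda>_. 0" _ _ "\<lambda>n. integral\<^sup>L lborel (\<lambda>x. indicator {real n<..} x * \<rho>' x) + lam * measure q {real n<..}"])
    show "\<forall>\<^sub>F n in sequentially. 0 \<le> \<rho> (real n)" by (simp add: \<rho>_nonneg)
    show "\<forall>\<^sub>F n in sequentially. \<rho> (real n) \<le> integral\<^sup>L lborel (\<lambda>x. indicator {real n<..} x * \<rho>' x) + lam * measure q {real n<..}"
      using bound by simp
    show "(\<lambda>n. integral\<^sup>L lborel (\<lambda>x. indicator {real n<..} x * \<rho>' x) + lam * measure q {real n<..}) \<longlonglongrightarrow> 0"
      using tendsto_add[OF L3 tendsto_mult[OF tendsto_const L4]] by simp
  qed simp
  have part1: "\<rho> 0 = lam - d * N"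
    using LIMSEQ_unique[OF T1 T2] by simp
  have part2: "\<rho> 0 = lam * laplace_tr q d" if d: "d > 0"
  proof -
    define w where "w r = indicator {0..} r * exp (- d * r)" for r :: real
    have w_nn: "0 \<le> w r" for r by (simp add: w_def)
    have w_meas[measurable]: "w \<in> borel_measurable borel" unfolding w_def by measurable
    define Fn where "Fn r = (\<integral>\<^sup>+ x. indicator {0<..r} x * (1::ennreal) \<partial>q)" for r
    define Gn where "Gn r = (\<integral>\<^sup>+ x. indicator {0<..r} x * ennreal (\<rho>' x) \<partial>lborel)" for r
    have Fn_eq: "Fn r = ennreal (F r)" for r
    proof -
      have "Fn r = emeasure q {0<..r}" unfolding Fn_def
        by (simp add: q_sets)
      then show ?thesis by (simp add: F_def q.emeasure_eq_measure)
    qed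
    have Gn_eq: "Gn r = ennreal (G r)" for r
    proof -
      have "Gn r = (\<integral>\<^sup>+ x. ennreal (indicator {0<..r} x * \<rho>' x) \<partial>lborel)"
        unfolding Gn_def by (intro nn_integral_cong) (simp add: indicator_def)
      also have "\<dots> = ennreal (G r)" unfolding G_def
      proof (rule nn_integral_eq_integral)
        have "integrable lborel (\<lambda>x. indicator {0<..r} x *\<^sub>R \<rho>' x)"
          by (rule integrable_mult_indicator) (auto simp: \<rho>'_int)
        then show "integrable lborel (\<lambda>x. indicator {0<..r} x * \<rho>' x)" by simp
      qed (simp add: \<rho>'_nn)
      finally show ?thesis .
    qed
    have Fn_meas[measurable]: "Fn \<in> borel_measurable lborel"
      unfolding Fn_def by (rule pmeas) (auto simp: q_sets prob_space_imp_sigma_finite[OF q_prob])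
    have Gn_meas[measurable]: "Gn \<in> borel_measurable lborel"
      unfolding Gn_def by (rule pmeas) (auto simp: lborel.sigma_finite_measure_axioms)
    have real_eq: "exp (- d * r) * \<rho>' r + lam * (w r * F r) = \<rho> 0 * w r + d * (w r * G r)" for r
    proof (cases "0 \<le> r")
      case True
      then have "exp (- d * r) * (\<rho> r + lam * F r) = exp (- d * r) * (\<rho> 0 + d * G r)"
        using key by simp
      then show ?thesis using True by (simp add: w_def \<rho>'_def algebra_simps)
    next
      case False
      then show ?thesis by (simp add: w_def \<rho>'_def)
    qed
    have pw: "ennreal (exp (- d * r) * \<rho>' r) + ennreal lam * (ennreal (w r) * Fn r)
        = ennreal (\<rho> 0) * ennreal (w r) + ennreal d * (ennreal (w r) * Gn r)" for r
    proof -
      have nn1: "0 \<le> exp (- d * r) * \<rho>' r" by (simp add: \<rho>'_nn)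
      have nn2: "0 \<le> lam * (w r * F r)" using lam_pos w_nn F_nn by simp
      have nn3: "0 \<le> \<rho> 0 * w r" using \<rho>_nonneg[of 0] w_nn by simp
      have nn4: "0 \<le> d * (w r * G r)" using d w_nn G_nn by simp
      have "ennreal (exp (- d * r) * \<rho>' r + lam * (w r * F r)) = ennreal (\<rho> 0 * w r + d * (w r * G r))"
        using real_eq by simp
      then show ?thesis
        using nn1 nn2 nn3 nn4 lam_pos d w_nn F_nn G_nn \<rho>_nonneg[of 0]
        by (simp add: Fn_eq Gn_eq ennreal_plus ennreal_mult)
    qed
    have int_eq: "(\<integral>\<^sup>+ r. ennreal (exp (- d * r) * \<rho>' r) \<partial>lborel) + ennreal lam * (\<integral>\<^sup>+ r. ennreal (w r) * Fn r \<partial>lborel)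
       = ennreal (\<rho> 0) * (\<integral>\<^sup>+ r. ennreal (w r) \<partial>lborel) + ennreal d * (\<integral>\<^sup>+ r. ennreal (w r) * Gn r \<partial>lborel)"
    proof -
      have "(\<integral>\<^sup>+ r. ennreal (exp (- d * r) * \<rho>' r) + ennreal lam * (ennreal (w r) * Fn r) \<partial>lborel)
        = (\<integral>\<^sup>+ r. ennreal (\<rho> 0) * ennreal (w r) + ennreal d * (ennreal (w r) * Gn r) \<partial>lborel)"
        using pw by simp
      then show ?thesis
        by (simp add: nn_integral_add nn_integral_cmult)
    qed
    define Lq where "Lq = laplace_tr q d"
    have Lq_nn: "0 \<le> Lq"
      unfolding Lq_def laplace_tr_def by (intro Bochner_Integration.integral_nonneg) simp
    have exp_int: "integrable q (\<lambda>x. exp (- d * x))"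
    proof (rule Bochner_Integration.integrable_bound[where f="\<lambda>x. 1::real"])
      show "integrable q (\<lambda>x. 1::real)" by simp
      show "(\<lambda>x. exp (- d * x)) \<in> borel_measurable q"
        using q_sets by (simp add: measurable_cong_sets[OF q_sets refl])
      show "AE x in q. norm (exp (- d * x)) \<le> norm (1::real)"
        using AEq by eventually_elim (use d in simp)
    qed
    have B: "(\<integral>\<^sup>+ r. ennreal (w r) * Fn r \<partial>lborel) = ennreal (Lq / d)"
    proof -
      have "(\<integral>\<^sup>+ r. ennreal (w r) * Fn r \<partial>lborel)
          = (\<integral>\<^sup>+ x. indicator {0<..} x * 1 * ennreal (exp (- d * x) / d) \<partial>q)"
        unfolding w_def Fn_def
        by (rule fub) (auto simp: q_sets prob_space_imp_sigma_finite[OF q_prob] d)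
      also have "\<dots> = (\<integral>\<^sup>+ x. ennreal (exp (- d * x) / d) \<partial>q)"
        using AEq by (intro nn_integral_cong_AE) (auto elim!: eventually_mono)
      also have "\<dots> = ennreal (integral\<^sup>L q (\<lambda>x. exp (- d * x) / d))"
        by (rule nn_integral_eq_integral) (use exp_int d in \<open>auto intro!: AE_I2\<close>)
      also have "\<dots> = ennreal (Lq / d)"
        by (simp add: Lq_def laplace_tr_def)
      finally show ?thesis .
    qed
    have C: "(\<integral>\<^sup>+ r. ennreal (w r) \<partial>lborel) = ennreal (1 / d)"
      using E_int[OF d, of 0] by (simp add: w_def)
    define Ar where "Ar = integral\<^sup>L lborel (\<lambda>x. exp (- d * x) * \<rho>' x)"
    have Ar_int: "integrable lborel (\<lambda>x. exp (- d * x) * \<rho>' x)"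
    proof (rule Bochner_Integration.integrable_bound[OF \<rho>'_int])
      show "(\<lambda>x. exp (- d * x) * \<rho>' x) \<in> borel_measurable lborel" by measurable
      show "AE x in lborel. norm (exp (- d * x) * \<rho>' x) \<le> norm (\<rho>' x)"
      proof (rule AE_I2)
        fix x :: real
        show "norm (exp (- d * x) * \<rho>' x) \<le> norm (\<rho>' x)"
        proof (cases "0 \<le> x")
          case True
          then have "exp (- d * x) \<le> 1" using d by simp
          then show ?thesis using \<rho>'_nn[of x] by (simp add: abs_mult mult_left_le_one_le)
        next
          case False
          then show ?thesis by (simp add: \<rho>'_def)
        qed
      qed
    qed
    have Ar_nn: "0 \<le> Ar" unfolding Ar_def
      by (intro Bochner_Integration.integral_nonneg) (simp add: \<rho>'_nn)
    have A: "(\<integral>\<^sup>+ r. ennreal (exp (- d * r) * \<rho>' r) \<partial>lborel) = ennreal Ar"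
      unfolding Ar_def by (rule nn_integral_eq_integral) (use Ar_int \<rho>'_nn in auto)
    have D: "(\<integral>\<^sup>+ r. ennreal (w r) * Gn r \<partial>lborel) = ennreal (Ar / d)"
    proof -
      have "(\<integral>\<^sup>+ r. ennreal (w r) * Gn r \<partial>lborel)
          = (\<integral>\<^sup>+ x. indicator {0<..} x * ennreal (\<rho>' x) * ennreal (exp (- d * x) / d) \<partial>lborel)"
        unfolding w_def Gn_def
        by (rule fub) (auto simp: lborel.sigma_finite_measure_axioms d)
      also have "\<dots> = (\<integral>\<^sup>+ x. ennreal (exp (- d * x) * \<rho>' x / d) \<partial>lborel)"
      proof (rule nn_integral_cong_AE)
        show "AE x in lborel. indicator {0<..} x * ennreal (\<rho>' x) * ennreal (exp (- d * x) / d) = ennreal (exp (- d * x) * \<rho>' x / d)"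
        using AE_lborel_singleton[of 0]
        proof (rule eventually_mono)
        fix x :: real assume "x \<noteq> 0"
        then show "indicator {0<..} x * ennreal (\<rho>' x) * ennreal (exp (- d * x) / d) = ennreal (exp (- d * x) * \<rho>' x / d)"
          using \<rho>'_nn[of x] d
          by (cases "0 < x") (auto simp: \<rho>'_def ennreal_mult[symmetric] mult.commute)
      qed
      qed
      also have "\<dots> = ennreal (integral\<^sup>L lborel (\<lambda>x. exp (- d * x) * \<rho>' x / d))"
        by (rule nn_integral_eq_integral) (use Ar_int \<rho>'_nn d in auto)
      also have "\<dots> = ennreal (Ar / d)"
        by (simp add: Ar_def)
      finally show ?thesis .
    qed
    have "ennreal (Ar + lam * (Lq / d)) = ennreal (\<rho> 0 * (1 / d) + d * (Ar / d))"
    proof -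
      have m1: "ennreal (lam * (Lq / d)) = ennreal lam * ennreal (Lq / d)"
        by (rule ennreal_mult) (use lam_pos Lq_nn d in auto)
      have m2: "ennreal (\<rho> 0 * (1 / d)) = ennreal (\<rho> 0) * ennreal (1 / d)"
        by (rule ennreal_mult) (use \<rho>_nonneg[of 0] d in auto)
      have m3: "ennreal (d * (Ar / d)) = ennreal d * ennreal (Ar / d)"
        by (rule ennreal_mult) (use Ar_nn d in auto)
      have p1: "ennreal (Ar + lam * (Lq / d)) = ennreal Ar + ennreal (lam * (Lq / d))"
        by (rule ennreal_plus) (use Ar_nn lam_pos Lq_nn d in auto)
      have p2: "ennreal (\<rho> 0 * (1 / d) + d * (Ar / d)) = ennreal (\<rho> 0 * (1 / d)) + ennreal (d * (Ar / d))"
        by (rule ennreal_plus) (use Ar_nn \<rho>_nonneg[of 0] d in auto)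
      show ?thesis unfolding p1 p2 m1 m2 m3 using int_eq unfolding A B C D .
    qed
    then have "Ar + lam * (Lq / d) = \<rho> 0 * (1 / d) + d * (Ar / d)"
      using Ar_nn Lq_nn lam_pos d \<rho>_nonneg[of 0]
      by (subst (asm) ennreal_inj) auto
    then show ?thesis using d by (simp add: Lq_def field_simps)
  qed
  have Lq_nn: "0 \<le> laplace_tr q d"
    unfolding laplace_tr_def by (intro Bochner_Integration.integral_nonneg) simp
  have Npos: "N > 0" using N_pos N_def by simp
  show ?thesis
    unfolding Let_def N_def[symmetric]
  proof (intro conjI impI)
    show "\<rho> 0 / N = lam / N - d" using part1 Npos by (simp add: field_simps)
    assume d: "d > 0"
    have e: "lam * laplace_tr q d = lam - d * N" using part1 part2[OF d] by simp
    have pos: "1 - laplace_tr q d > 0"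
    proof -
      have "lam * (1 - laplace_tr q d) = d * N" using e by (simp add: algebra_simps)
      moreover have "d * N > 0" using d Npos by simp
      ultimately show ?thesis using lam_pos by (smt (verit) mult_nonneg_nonpos)
    qed
    show "N = lam * (1 - laplace_tr q d) / d" using e d by (simp add: field_simps)
    have h1: "lam / N = d / (1 - laplace_tr q d)" using e d Npos pos by (simp add: field_simps)
    then show "lam / N = d / (1 - laplace_tr q d)" .
    have "\<rho> 0 / N = lam / N * laplace_tr q d" using part2[OF d] by simp
    also have "\<dots> = d * laplace_tr q d / (1 - laplace_tr q d)" using h1 by simp
    finally show "\<rho> 0 / N = d * laplace_tr q d / (1 - laplace_tr q d)" .
    show "\<rho> 0 / N = lam / N * laplace_tr q d" using part2[OF d] by simp
  qed
qed

end
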